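(* For a group $G$, the following are equivalent: (A) $G = S(G)$; (B) every subgroup of finite index of $G$ is exponential in $G$; (C) every finite quotient of $G$ is nilpotent; (D) every subgroup of finite index of $G$ is subnormal in $G$.
   Context: $S(G) := \{ x \in G : x^{|G:H|} \in H \text{ for every subgroup } H \leqslant G \text{ of finite index}\}$. A subgroup $H$ of finite index in $G$ is exponential in $G$ if $x^{|G:H|} \in H$ for every $x \in G$. $H$ is subnormal in $G$ if there is a finite chain $H = H_0 \lhd H_1 \lhd \dots \lhd H_r = G$. *)

theory Defs
  imports "HOL-Algebra.Algebra"
begin

definition commutators :: "('a, 'b) monoid_scheme \<Rightarrow> 'a set \<Rightarrow> 'a set \<Rightarrow> 'a set" where
  "commutators G H K =
     {h \<otimes>\<^bsub>G\<^esub> k \<otimes>\<^bsub>G\<^esub> inv\<^bsub>G\<^esub> h \<otimes>\<^bsub>G\<^esub> inv\<^bsub>G\<^esub> k | h k. h \<in> H \<and> k \<in> K}"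

text \<open>Lower central series: gamma_1 = G, gamma_{i+1} = [gamma_i, G] (indexed from 0).\<close>
fun lower_central :: "('a, 'b) monoid_scheme \<Rightarrow> nat \<Rightarrow> 'a set" where
  "lower_central G 0 = carrier G"
| "lower_central G (Suc n) = generate G (commutators G (lower_central G n) (carrier G))"

definition nilpotent_group :: "('a, 'b) monoid_scheme \<Rightarrow> bool" where
  "nilpotent_group G \<longleftrightarrow> group G \<and> (\<exists>n. lower_central G n = {\<one>\<^bsub>G\<^esub>})"

definition finite_index :: "('a, 'b) monoid_scheme \<Rightarrow> 'a set \<Rightarrow> bool" where
  "finite_index G H \<longleftrightarrow> subgroup H G \<and> finite (rcosets\<^bsub>G\<^esub> H)"

definition group_index :: "('a, 'b) monoid_scheme \<Rightarrow> 'a set \<Rightarrow> nat" where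
  "group_index G H = card (rcosets\<^bsub>G\<^esub> H)"

definition exponential :: "('a, 'b) monoid_scheme \<Rightarrow> 'a set \<Rightarrow> bool" where
  "exponential G H \<longleftrightarrow> finite_index G H \<and>
     (\<forall>x\<in>carrier G. x [^]\<^bsub>G\<^esub> group_index G H \<in> H)"

definition S_set :: "('a, 'b) monoid_scheme \<Rightarrow> 'a set" where
  "S_set G = {x \<in> carrier G. \<forall>H. finite_index G H \<longrightarrow> x [^]\<^bsub>G\<^esub> group_index G H \<in> H}"

definition subnormal :: "('a, 'b) monoid_scheme \<Rightarrow> 'a set \<Rightarrow> bool" where
  "subnormal G H \<longleftrightarrow> (\<exists>hs :: 'a set list. hs \<noteq> [] \<and> hd hs = H \<and> last hs = carrier G \<and>
     (\<forall>i. Suc i < length hs \<longrightarrow> hs ! i \<lhd> G\<lparr>carrier := hs ! Suc i\<rparr>))"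

end

theory Submission
  imports Defs
begin


lemma card_image_eq_rel:
  assumes "\<forall>x\<in>A. \<forall>y\<in>A. f x = f y \<longleftrightarrow> g x = g y"
  shows "bij_betw (\<lambda>b. g (inv_into A f b)) (f ` A) (g ` A)"
proof -
  have "inj_on (\<lambda>b. g (inv_into A f b)) (f ` A)"
  proof (rule inj_onI)
    fix b c assume b: "b \<in> f ` A" and c: "c \<in> f ` A" and e: "g (inv_into A f b) = g (inv_into A f c)"
    have "inv_into A f b \<in> A" "inv_into A f c \<in> A" using b c by (auto intro: inv_into_into)
    then have "f (inv_into A f b) = f (inv_into A f c)" using assms e by blast
    then show "b = c" using b c by (simp add: f_inv_into_f)
  qed
  moreover have "(\<lambda>b. g (inv_into A f b)) ` (f ` A) = g ` A"
  proof
    show "(\<lambda>b. g (inv_into A f b)) ` f ` A \<subseteq> g ` A" by (auto intro: inv_into_into)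
  next
    show "g ` A \<subseteq> (\<lambda>b. g (inv_into A f b)) ` f ` A"
    proof
      fix z assume "z \<in> g ` A"
      then obtain x where x: "x \<in> A" "z = g x" by auto
      have i: "inv_into A f (f x) \<in> A" using x by (auto intro: inv_into_into)
      have "f (inv_into A f (f x)) = f x" using x by (simp add: f_inv_into_f)
      then have "g (inv_into A f (f x)) = g x" using assms i x by blast
      then show "z \<in> (\<lambda>b. g (inv_into A f b)) ` f ` A" using x by force
    qed
  qed
  ultimately show ?thesis by (simp add: bij_betw_def)
qed

lemma (in group) rcos_eq_iff:
  assumes "subgroup H G" "x \<in> carrier G" "y \<in> carrier G"
  shows "H #> x = H #> y \<longleftrightarrow> x \<otimes> inv y \<in> H"
proof
  assume e: "H #> x = H #> y"
  have "x \<in> H #> x" using assms by (simp add: rcos_self)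
  then obtain h where h: "h \<in> H" "x = h \<otimes> y" using e by (auto simp: r_coset_def)
  then have "x \<otimes> inv y = h" using assms subgroup.mem_carrier[OF assms(1)]
    by (simp add: m_assoc)
  then show "x \<otimes> inv y \<in> H" using h by simp
next
  assume a: "x \<otimes> inv y \<in> H"
  have "x = (x \<otimes> inv y) \<otimes> y" using assms by (simp add: m_assoc)
  then have "x \<in> H #> y" using a by (auto simp: r_coset_def)
  then show "H #> x = H #> y" using assms repr_independence by auto
qed

lemma (in group) rcosets_eq_image: "rcosets H = (\<lambda>x. H #> x) ` carrier G"
  by (auto simp: RCOSETS_def)



lemma (in normal) Mod_group_hom: "group_hom G (G Mod H) (\<lambda>a. H #> a)"
  using r_coset_hom_Mod factorgroup_is_group
  by (simp add: group_hom_def group_hom_axioms_def is_group)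

lemma (in normal) Mod_mult_inv:
  assumes "x \<in> carrier G" "y \<in> carrier G"
  shows "(H #> x) \<otimes>\<^bsub>G Mod H\<^esub> inv\<^bsub>G Mod H\<^esub> (H #> y) = H #> (x \<otimes> inv y)"
proof -
  interpret h: group_hom G "G Mod H" "\<lambda>a. H #> a" by (rule Mod_group_hom)
  show ?thesis using assms by (simp add: h.hom_mult h.hom_inv)
qed

lemma (in normal) quot_corr:
  assumes Hb: "subgroup Hb (G Mod H)"
  shows "subgroup (\<Union>Hb) G"
    and "\<And>x. x \<in> carrier G \<Longrightarrow> x \<in> \<Union>Hb \<longleftrightarrow> H #> x \<in> Hb"
    and "bij_betw (\<lambda>b. (\<lambda>x. Hb #>\<^bsub>G Mod H\<^esub> (H #> x)) (inv_into (carrier G) (\<lambda>x. (\<Union>Hb) #> x) b))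
            (rcosets (\<Union>Hb)) (rcosets\<^bsub>G Mod H\<^esub> Hb)"
    and "\<And>x k. x \<in> carrier G \<Longrightarrow> x [^] (k::nat) \<in> \<Union>Hb \<longleftrightarrow> (H #> x) [^]\<^bsub>G Mod H\<^esub> k \<in> Hb"
proof -
  show sg: "subgroup (\<Union>Hb) G" using assms factgroup_subgroup_union_subgroup by blast
  show ch: "\<And>x. x \<in> carrier G \<Longrightarrow> x \<in> \<Union>Hb \<longleftrightarrow> H #> x \<in> Hb"
    using factgroup_subgroup_union_char[OF Hb] by auto
  interpret Q: group "G Mod H" by (rule factorgroup_is_group)
  have r1: "rcosets (\<Union>Hb) = (\<lambda>x. (\<Union>Hb) #> x) ` carrier G" by (rule rcosets_eq_image)
  have r2: "rcosets\<^bsub>G Mod H\<^esub> Hb = (\<lambda>x. Hb #>\<^bsub>G Mod H\<^esub> (H #> x)) ` carrier G"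
    using Q.rcosets_eq_image[of Hb] carrier_FactGroup[of G H] by (simp add: image_image)
  have "\<forall>x\<in>carrier G. \<forall>y\<in>carrier G. (\<Union>Hb) #> x = (\<Union>Hb) #> y \<longleftrightarrow>
          Hb #>\<^bsub>G Mod H\<^esub> (H #> x) = Hb #>\<^bsub>G Mod H\<^esub> (H #> y)"
  proof (intro ballI)
    fix x y assume x: "x \<in> carrier G" and y: "y \<in> carrier G"
    have hx: "H #> x \<in> carrier (G Mod H)" "H #> y \<in> carrier (G Mod H)"
      using x y carrier_FactGroup by auto
    have "(\<Union>Hb) #> x = (\<Union>Hb) #> y \<longleftrightarrow> x \<otimes> inv y \<in> \<Union>Hb" using rcos_eq_iff[OF sg x y] .
    also have "\<dots> \<longleftrightarrow> H #> (x \<otimes> inv y) \<in> Hb" using ch x y by simp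
    also have "\<dots> \<longleftrightarrow> (H #> x) \<otimes>\<^bsub>G Mod H\<^esub> inv\<^bsub>G Mod H\<^esub> (H #> y) \<in> Hb"
      using Mod_mult_inv x y by simp
    also have "\<dots> \<longleftrightarrow> Hb #>\<^bsub>G Mod H\<^esub> (H #> x) = Hb #>\<^bsub>G Mod H\<^esub> (H #> y)"
      using Q.rcos_eq_iff[OF Hb hx] by simp
    finally show "(\<Union>Hb) #> x = (\<Union>Hb) #> y \<longleftrightarrow>
          Hb #>\<^bsub>G Mod H\<^esub> (H #> x) = Hb #>\<^bsub>G Mod H\<^esub> (H #> y)" .
  qed
  from card_image_eq_rel[OF this]
  show "bij_betw (\<lambda>b. (\<lambda>x. Hb #>\<^bsub>G Mod H\<^esub> (H #> x)) (inv_into (carrier G) (\<lambda>x. (\<Union>Hb) #> x) b))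
            (rcosets (\<Union>Hb)) (rcosets\<^bsub>G Mod H\<^esub> Hb)" unfolding r1 r2 .
  fix x k assume x: "x \<in> carrier G"
  show "x [^] (k::nat) \<in> \<Union>Hb \<longleftrightarrow> (H #> x) [^]\<^bsub>G Mod H\<^esub> k \<in> Hb"
    using ch[of "x [^] k"] x FactGroup_pow[OF x, of k] by simp
qed

lemma (in normal) quot_corr_card:
  assumes Hb: "subgroup Hb (G Mod H)"
  shows "card (rcosets (\<Union>Hb)) = card (rcosets\<^bsub>G Mod H\<^esub> Hb)"
    and "finite (rcosets (\<Union>Hb)) \<longleftrightarrow> finite (rcosets\<^bsub>G Mod H\<^esub> Hb)"
  using quot_corr(3)[OF Hb] bij_betw_same_card bij_betw_finite by blast+

definition allexp :: "('a, 'b) monoid_scheme \<Rightarrow> bool" where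
  "allexp Q \<longleftrightarrow> (\<forall>K. subgroup K Q \<longrightarrow> (\<forall>y\<in>carrier Q. y [^]\<^bsub>Q\<^esub> card (rcosets\<^bsub>Q\<^esub> K) \<in> K))"

lemma (in normal) allexp_Mod:
  assumes "\<And>K. subgroup K G \<Longrightarrow> H \<subseteq> K \<Longrightarrow> finite (rcosets K) \<Longrightarrow>
              (\<forall>x\<in>carrier G. x [^] card (rcosets K) \<in> K)"
    and fin: "finite (carrier (G Mod H))"
  shows "allexp (G Mod H)"
  unfolding allexp_def
proof (intro allI impI ballI)
  fix Hb Y assume Hb: "subgroup Hb (G Mod H)" and Y: "Y \<in> carrier (G Mod H)"
  interpret Q: group "G Mod H" by (rule factorgroup_is_group)
  obtain x where x: "x \<in> carrier G" "Y = H #> x" using Y carrier_FactGroup[of G H] by auto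
  have sg: "subgroup (\<Union>Hb) G" using quot_corr(1)[OF Hb] .
  have HK: "H \<subseteq> \<Union>Hb"
  proof
    fix h assume h: "h \<in> H"
    then have "h \<in> carrier G" by (simp add: subset_iff subset)
    moreover have "H #> h = H" using h by (simp add: rcos_const)
    moreover have "H \<in> Hb" using Hb subgroup.one_closed[OF Hb] by simp
    ultimately show "h \<in> \<Union>Hb" using quot_corr(2)[OF Hb] by simp
  qed
  have finQ: "finite (rcosets\<^bsub>G Mod H\<^esub> Hb)"
    using fin Q.rcosets_subset_PowG[OF Hb] by (meson finite_Pow_iff finite_subset)
  then have "finite (rcosets (\<Union>Hb))" using quot_corr_card(2)[OF Hb] by simp
  then have "x [^] card (rcosets (\<Union>Hb)) \<in> \<Union>Hb" using assms(1)[OF sg HK] x by blast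
  then show "Y [^]\<^bsub>G Mod H\<^esub> card (rcosets\<^bsub>G Mod H\<^esub> Hb) \<in> Hb"
    using quot_corr(4)[OF Hb x(1)] quot_corr_card(1)[OF Hb] x by simp
qed



lemma (in group) inv_cancel_simps [simp]:
  assumes "x \<in> carrier G" "y \<in> carrier G"
  shows "inv x \<otimes> (x \<otimes> y) = y" "x \<otimes> (inv x \<otimes> y) = y"
  using assms by (simp_all add: m_assoc[symmetric])

lemma (in group) subgroup_pow_closed:
  assumes "subgroup K G" "x \<in> K" shows "x [^] (n::nat) \<in> K"
  by (induction n) (auto simp: assms subgroup.one_closed subgroup.m_closed)

lemma (in group) conj_pow:
  assumes "x \<in> carrier G" "h \<in> carrier G"
  shows "(x \<otimes> h \<otimes> inv x) [^] (n::nat) = x \<otimes> h [^] n \<otimes> inv x"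
proof (induction n)
  case 0 then show ?case using assms by simp
next
  case (Suc n)
  have "(x \<otimes> h \<otimes> inv x) [^] Suc n = (x \<otimes> h [^] n \<otimes> inv x) \<otimes> (x \<otimes> h \<otimes> inv x)"
    using Suc by simp
  also have "\<dots> = x \<otimes> (h [^] n \<otimes> (inv x \<otimes> x) \<otimes> h) \<otimes> inv x"
    using assms by (simp add: m_assoc)
  also have "\<dots> = x \<otimes> h [^] Suc n \<otimes> inv x" using assms by simp
  finally show ?case .
qed

lemma (in group) card_rcosets_pos:
  assumes "finite (carrier G)" "subgroup K G" shows "card (rcosets K) > 0"
proof -
  have "K \<in> rcosets K" using assms(2) subgroup.subgroup_in_rcosets[OF assms(2) is_group] by simp
  moreover have "finite (rcosets K)" using assms rcosets_subset_PowG[OF assms(2)]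
    by (meson finite_Pow_iff finite_subset)
  ultimately show ?thesis using card_gt_0_iff by blast
qed

lemma (in group) allexp_coprime_mem:
  assumes ae: "allexp G" and fin: "finite (carrier G)" and K: "subgroup K G"
    and x: "x \<in> carrier G" and xn: "x [^] n = \<one>" and cop: "coprime (card (rcosets K)) n"
  shows "x \<in> K"
proof -
  let ?m = "card (rcosets K)"
  have m0: "?m \<noteq> 0" using card_rcosets_pos[OF fin K] by simp
  obtain u v where uv: "?m * u = n * v + gcd ?m n" using bezout_nat[OF m0] by blast
  then have uv1: "?m * u = n * v + 1" using cop by simp
  have "x [^] ?m \<in> K" using ae K x unfolding allexp_def by blast
  then have "(x [^] ?m) [^] u \<in> K" using K subgroup_pow_closed by blast
  moreover have "(x [^] ?m) [^] u = x"
  proof -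
    have "(x [^] ?m) [^] u = x [^] (n * v + 1)" using x uv1 by (simp add: nat_pow_pow)
    also have "\<dots> = (x [^] n) [^] v \<otimes> x" using x by (simp add: nat_pow_pow)
    also have "\<dots> = x" using x xn by simp
    finally show ?thesis .
  qed
  ultimately show ?thesis by simp
qed

lemma (in group) subgroup_elem_pow_card:
  assumes "subgroup P G" "x \<in> P" shows "x [^] card P = \<one>"
proof -
  interpret S: group "G\<lparr>carrier := P\<rparr>" using assms subgroup.subgroup_is_group is_group by blast
  have "x [^]\<^bsub>G\<lparr>carrier := P\<rparr>\<^esub> order (G\<lparr>carrier := P\<rparr>) = \<one>\<^bsub>G\<lparr>carrier := P\<rparr>\<^esub>"
    using S.pow_order_eq_1 assms by simp
  then show ?thesis by (simp add: order_def nat_pow_consistent[symmetric])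
qed

lemma (in group) allexp_sylow:
  assumes ae: "allexp G" and fin: "finite (carrier G)" and p: "Factorial_Ring.prime (p::nat)"
    and ord: "order G = p ^ a * m" and nd: "\<not> p dvd m"
    and P: "subgroup P G" and cP: "card P = p ^ a"
  shows "P = {x \<in> carrier G. x [^] (p ^ a) = \<one>}" and "P \<lhd> G"
proof -
  have "card (rcosets P) * p ^ a = p ^ a * m" using lagrange[OF P] cP ord by simp
  then have idx: "card (rcosets P) = m" using p by (simp add: prime_gt_0_nat)
  have cop: "coprime (card (rcosets P)) (p ^ a)"
    using idx nd p by (simp add: prime_imp_coprime coprime_commute[of m p])
  show eq: "P = {x \<in> carrier G. x [^] (p ^ a) = \<one>}"
  proof
    show "P \<subseteq> {x \<in> carrier G. x [^] (p ^ a) = \<one>}"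
      using subgroup_elem_pow_card[OF P] cP subgroup.mem_carrier[OF P] by auto
    show "{x \<in> carrier G. x [^] (p ^ a) = \<one>} \<subseteq> P"
      using allexp_coprime_mem[OF ae fin P _ _ cop] by auto
  qed
  show "P \<lhd> G"
  proof (rule normal_invI[OF P])
    fix x h assume x: "x \<in> carrier G" and h: "h \<in> P"
    have hc: "h \<in> carrier G" "h [^] (p ^ a) = \<one>" using h eq by auto
    have "(x \<otimes> h \<otimes> inv x) [^] (p ^ a) = \<one>" using conj_pow[OF x hc(1)] hc x by simp
    then show "x \<otimes> h \<otimes> inv x \<in> P" using eq x hc by auto
  qed
qed



lemma (in group) sylow_pkg:
  assumes ae: "allexp G" and fin: "finite (carrier G)" and p: "Factorial_Ring.prime (p::nat)"
  shows "\<exists>P. P \<lhd> G \<and> card P = p ^ multiplicity p (order G) \<and>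
             P = {x \<in> carrier G. x [^] (p ^ multiplicity p (order G)) = \<one>}"
proof -
  let ?a = "multiplicity p (order G)"
  let ?m = "order G div p ^ ?a"
  have o0: "order G \<noteq> 0" using fin order_gt_0_iff_finite by auto
  have dv: "p ^ ?a dvd order G" by (rule multiplicity_dvd)
  have ord: "order G = p ^ ?a * ?m" using dv by simp
  have nd: "\<not> p dvd ?m"
  proof
    assume "p dvd ?m"
    then have "p ^ ?a * p dvd p ^ ?a * ?m" by (rule mult_dvd_mono[OF dvd_refl])
    then have "p ^ Suc ?a dvd order G" using ord by (metis mult.commute power_Suc)
    moreover have "\<not> is_unit p" using p by (metis not_prime_unit)
    ultimately have "Suc ?a \<le> ?a" using multiplicity_geI[OF o0] by blast
    then show False by simp
  qed
  obtain P where P: "subgroup P G" "card P = p ^ ?a"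
    using sylow_thm[OF p is_group ord fin] by blast
  have "P = {x \<in> carrier G. x [^] (p ^ ?a) = \<one>}" "P \<lhd> G" using allexp_sylow[OF ae fin p ord nd P] by auto
  then show ?thesis using P(2) by blast
qed

lemma (in group) pow_coprime_one:
  assumes "x \<in> carrier G" "x [^] (a::nat) = \<one>" "x [^] (b::nat) = \<one>" "coprime a b"
  shows "x = \<one>"
proof -
  have "ord x dvd a" "ord x dvd b" using assms pow_eq_id by auto
  then have "ord x dvd gcd a b" by simp
  then have "ord x = 1" using assms(4) by simp
  then show ?thesis using ord_eq_1 assms(1) by simp
qed

lemma (in group) comm_from_commutator:
  assumes "x \<in> carrier G" "y \<in> carrier G" "x \<otimes> y \<otimes> inv x \<otimes> inv y = \<one>"
  shows "x \<otimes> y = y \<otimes> x"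
proof -
  have "x \<otimes> y = (x \<otimes> y \<otimes> inv x \<otimes> inv y) \<otimes> (y \<otimes> x)"
    using assms(1,2) by (simp add: m_assoc)
  then show ?thesis using assms by simp
qed

lemma (in group) normal_trivial_inter_commute:
  assumes P: "P \<lhd> G" and S: "S \<lhd> G" and triv: "\<And>z. z \<in> P \<Longrightarrow> z \<in> S \<Longrightarrow> z = \<one>"
    and x: "x \<in> P" and y: "y \<in> S"
  shows "x \<otimes> y = y \<otimes> x"
proof -
  have xc: "x \<in> carrier G" using subgroup.mem_carrier[OF normal_imp_subgroup[OF P] x] .
  have yc: "y \<in> carrier G" using subgroup.mem_carrier[OF normal_imp_subgroup[OF S] y] .
  have ix: "inv x \<in> P" using subgroup.m_inv_closed[OF normal_imp_subgroup[OF P] x] .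
  have "y \<otimes> inv x \<otimes> inv y \<in> P"
    using normal_invE(2)[OF P yc ix] .
  then have c1: "x \<otimes> (y \<otimes> inv x \<otimes> inv y) \<in> P"
    using subgroup.m_closed[OF normal_imp_subgroup[OF P] x] by simp
  have "x \<otimes> y \<otimes> inv x \<in> S" using normal_invE(2)[OF S xc y] .
  then have c2: "x \<otimes> y \<otimes> inv x \<otimes> inv y \<in> S"
    using subgroup.m_closed[OF normal_imp_subgroup[OF S]] subgroup.m_inv_closed[OF normal_imp_subgroup[OF S] y] by simp
  have "x \<otimes> (y \<otimes> inv x \<otimes> inv y) = x \<otimes> y \<otimes> inv x \<otimes> inv y" using xc yc by (simp add: m_assoc)
  then have "x \<otimes> y \<otimes> inv x \<otimes> inv y = \<one>" using triv c1 c2 by simp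
  then show ?thesis using comm_from_commutator xc yc by blast
qed

lemma (in group) card_subgroup_dvd:
  assumes "subgroup S G" "subgroup T G" "S \<subseteq> T"
  shows "card S dvd card T"
proof -
  interpret T: group "G\<lparr>carrier := T\<rparr>" using assms(2) subgroup.subgroup_is_group is_group by blast
  have "subgroup S (G\<lparr>carrier := T\<rparr>)" using subgroup_incl assms by blast
  then have "card (rcosets\<^bsub>G\<lparr>carrier := T\<rparr>\<^esub> S) * card S = order (G\<lparr>carrier := T\<rparr>)"
    using T.lagrange by blast
  then have "card (rcosets\<^bsub>G\<lparr>carrier := T\<rparr>\<^esub> S) * card S = card T" by (simp add: order_def)
  then show ?thesis by (metis dvd_triv_right)
qed



lemma mult_split_nat:
  assumes p: "Factorial_Ring.prime (p::nat)" and n: "n \<noteq> 0"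
  shows "n = p ^ multiplicity p n * (n div p ^ multiplicity p n)"
    and "\<not> p dvd (n div p ^ multiplicity p n)"
proof -
  let ?a = "multiplicity p n"
  let ?m = "n div p ^ ?a"
  have dv: "p ^ ?a dvd n" by (rule multiplicity_dvd)
  show ord: "n = p ^ ?a * ?m" using dv by simp
  show "\<not> p dvd ?m"
  proof
    assume "p dvd ?m"
    then have "p ^ ?a * p dvd p ^ ?a * ?m" by (rule mult_dvd_mono[OF dvd_refl])
    then have "p ^ Suc ?a dvd n" using ord by (metis mult.commute power_Suc)
    moreover have "\<not> is_unit p" using p by (metis not_prime_unit)
    ultimately have "Suc ?a \<le> ?a" using multiplicity_geI[OF n] by blast
    then show False by simp
  qed
qed

definition conjact :: "('a, 'b) monoid_scheme \<Rightarrow> 'a \<Rightarrow> 'a \<Rightarrow> 'a" where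
  "conjact Q = (\<lambda>g. \<lambda>h\<in>carrier Q. g \<otimes>\<^bsub>Q\<^esub> h \<otimes>\<^bsub>Q\<^esub> inv\<^bsub>Q\<^esub> g)"

lemma (in group) conjact_action: "group_action G (carrier G) (conjact G)"
  unfolding conjact_def by (rule action_by_conjugation)

lemma (in group) orbit_conj:
  assumes "x \<in> carrier G"
  shows "orbit G (conjact G) x = {g \<otimes> x \<otimes> inv g | g. g \<in> carrier G}"
  using assms by (auto simp: orbit_def conjact_def)

lemma (in group) stab_conj:
  assumes "x \<in> carrier G"
  shows "stabilizer G (conjact G) x = {g \<in> carrier G. g \<otimes> x \<otimes> inv g = x}"
  using assms by (auto simp: stabilizer_def conjact_def)

lemma (in group) orbit_same:
  assumes "x \<in> carrier G" "y \<in> orbit G (conjact G) x"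
  shows "orbit G (conjact G) y = orbit G (conjact G) x"
proof -
  interpret A: group_action G "carrier G" "conjact G" by (rule conjact_action)
  have yc: "y \<in> carrier G" using assms orbit_conj by auto
  show ?thesis
  proof
    show "orbit G (conjact G) y \<subseteq> orbit G (conjact G) x"
    proof
      fix z assume z: "z \<in> orbit G (conjact G) y"
      have "z \<in> carrier G" using z yc orbit_conj by auto
      then show "z \<in> orbit G (conjact G) x" using A.orbit_trans[OF assms(1) yc _ assms(2) z] by simp
    qed
    show "orbit G (conjact G) x \<subseteq> orbit G (conjact G) y"
    proof
      fix z assume z: "z \<in> orbit G (conjact G) x"
      have "z \<in> carrier G" using z assms orbit_conj by auto
      moreover have "x \<in> orbit G (conjact G) y" using A.orbit_sym[OF assms(1) yc assms(2)] .
      ultimately show "z \<in> orbit G (conjact G) y" using A.orbit_trans[OF yc assms(1) _ _ z] by simp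
    qed
  qed
qed

lemma (in group) sylow_orbit_dvd:
  assumes ae: "allexp G" and fin: "finite (carrier G)" and p: "Factorial_Ring.prime (p::nat)"
    and P: "P = {x \<in> carrier G. x [^] (p ^ multiplicity p (order G)) = \<one>}" and PN: "P \<lhd> G"
    and x: "x \<in> P"
  shows "card (orbit G (conjact G) x) dvd p ^ multiplicity p (order G)"
proof -
  interpret A: group_action G "carrier G" "conjact G" by (rule conjact_action)
  let ?a = "multiplicity p (order G)"
  let ?m = "order G div p ^ ?a"
  let ?o = "card (orbit G (conjact G) x)"
  let ?st = "stabilizer G (conjact G) x"
  have xc: "x \<in> carrier G" using x P by auto
  have o0: "order G \<noteq> 0" using fin order_gt_0_iff_finite by auto
  have ord: "order G = p ^ ?a * ?m" and nd: "\<not> p dvd ?m" using mult_split_nat[OF p o0] by auto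
  have ost: "?o * card ?st = order G" using A.orbit_stabilizer_theorem[OF xc] .
  have stsub: "subgroup ?st G" using A.stabilizer_subgroup[OF xc] .
  have cop: "coprime ?o ?m"
  proof (rule ccontr)
    assume nc: "\<not> coprime ?o ?m"
    then have "gcd ?o ?m \<noteq> 1" by (simp add: coprime_iff_gcd_eq_1)
    then obtain q where q: "Factorial_Ring.prime q" "q dvd gcd ?o ?m" using prime_factor_nat by blast
    then have qo: "q dvd ?o" and qm: "q dvd ?m" by auto
    have qp: "q \<noteq> p" using qm nd by auto
    let ?b = "multiplicity q (order G)"
    obtain S where S: "S \<lhd> G" "card S = q ^ ?b" "S = {x \<in> carrier G. x [^] (q ^ ?b) = \<one>}"
      using sylow_pkg[OF ae fin q(1)] by blast
    have copq: "coprime (p ^ ?a) (q ^ ?b)" using primes_coprime[OF p q(1) qp[symmetric]] by simp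
    have triv: "\<And>z. z \<in> P \<Longrightarrow> z \<in> S \<Longrightarrow> z = \<one>"
      using pow_coprime_one[OF _ _ _ copq] P S(3) by auto
    have Sst: "S \<subseteq> ?st"
    proof
      fix y assume y: "y \<in> S"
      have yc: "y \<in> carrier G" using y S(3) by auto
      have "x \<otimes> y = y \<otimes> x" using normal_trivial_inter_commute[OF PN S(1) triv x y] .
      then have "y \<otimes> x \<otimes> inv y = x" using xc yc by (metis m_assoc r_inv r_one inv_closed)
      then show "y \<in> ?st" using stab_conj[OF xc] yc by simp
    qed
    have "card S dvd card ?st" using card_subgroup_dvd[OF normal_imp_subgroup[OF S(1)] stsub Sst] .
    then have "q ^ ?b dvd card ?st" using S(2) by simp
    then have "q * q ^ ?b dvd ?o * card ?st" using qo by (rule mult_dvd_mono[rotated])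
    then have "q ^ Suc ?b dvd order G" using ost by simp
    moreover have "\<not> is_unit q" using q(1) by (metis not_prime_unit)
    ultimately have "Suc ?b \<le> ?b" using multiplicity_geI[OF o0] by blast
    then show False by simp
  qed
  have "?o dvd p ^ ?a * ?m" using ost ord by (metis dvd_triv_left)
  then show ?thesis using coprime_dvd_mult_left_iff[OF cop] by simp
qed



lemma (in group) allexp_center:
  assumes ae: "allexp G" and fin: "finite (carrier G)" and nt: "carrier G \<noteq> {\<one>}"
  shows "\<exists>z\<in>carrier G. z \<noteq> \<one> \<and> (\<forall>g\<in>carrier G. z \<otimes> g = g \<otimes> z)"
proof -
  interpret A: group_action G "carrier G" "conjact G" by (rule conjact_action)
  have "order G \<noteq> 1"
  proof
    assume "order G = 1"
    then have "card (carrier G) = 1" by (simp add: order_def)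
    then show False using nt one_closed by (metis card_1_singletonE singletonD)
  qed
  then obtain p where p: "Factorial_Ring.prime (p::nat)" "p dvd order G" using prime_factor_nat by blast
  let ?a = "multiplicity p (order G)"
  have o0: "order G \<noteq> 0" using fin order_gt_0_iff_finite by auto
  have nu: "\<not> is_unit p" using p(1) by (metis not_prime_unit)
  have a1: "1 \<le> ?a" using multiplicity_geI[OF o0 nu, of 1] p(2) by simp
  obtain P where P: "P \<lhd> G" "card P = p ^ ?a" "P = {x \<in> carrier G. x [^] (p ^ ?a) = \<one>}"
    using sylow_pkg[OF ae fin p(1)] by blast
  let ?orb = "\<lambda>x. orbit G (conjact G) x"
  have PG: "P \<subseteq> carrier G" using P(3) by auto
  have finP: "finite P" using PG fin finite_subset by blast
  have orbP: "?orb x \<subseteq> P" if x: "x \<in> P" for x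
  proof -
    have xc: "x \<in> carrier G" using x PG by auto
    show ?thesis using orbit_conj[OF xc] normal_invE(2)[OF P(1) _ x] by auto
  qed
  have self: "x \<in> ?orb x" if "x \<in> carrier G" for x using A.orbit_refl that .
  define F where "F = {x \<in> P. ?orb x = {x}}"
  define D where "D = P - F"
  have D_union: "D = \<Union>(?orb ` D)"
  proof
    show "D \<subseteq> \<Union>(?orb ` D)" using self PG D_def by auto
    show "\<Union>(?orb ` D) \<subseteq> D"
    proof
      fix y assume "y \<in> \<Union>(?orb ` D)"
      then obtain x where x: "x \<in> D" "y \<in> ?orb x" by auto
      have xP: "x \<in> P" and xF: "x \<notin> F" using x D_def by auto
      have xc: "x \<in> carrier G" using xP PG by auto
      have yP: "y \<in> P" using orbP[OF xP] x by auto
      have eq: "?orb y = ?orb x" using orbit_same[OF xc x(2)] .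
      have "y \<notin> F"
      proof
        assume "y \<in> F"
        then have "?orb y = {y}" by (simp add: F_def)
        then have "?orb x = {y}" using eq by simp
        moreover then have "x = y" using self[OF xc] by auto
        ultimately show False using xF xP F_def by auto
      qed
      then show "y \<in> D" using yP D_def by auto
    qed
  qed
  have "p dvd card (\<Union>(?orb ` D))"
  proof (rule dvd_partition)
    show "finite (\<Union>(?orb ` D))" using D_union[symmetric] finP D_def by simp
    show "\<forall>c\<in>?orb ` D. p dvd card c"
    proof
      fix c assume "c \<in> ?orb ` D"
      then obtain x where x: "x \<in> D" "c = ?orb x" by auto
      have xP: "x \<in> P" and xF: "x \<notin> F" using x D_def by auto
      have xc: "x \<in> carrier G" using xP PG by auto
      have "card c dvd p ^ ?a" using sylow_orbit_dvd[OF ae fin p(1) P(3) P(1) xP] x by simp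
      then obtain i where i: "card c = p ^ i" using divides_primepow_nat[OF p(1)] by blast
      have "i \<noteq> 0"
      proof
        assume "i = 0"
        then have "card c = 1" using i by simp
        then obtain w where "c = {w}" by (rule card_1_singletonE)
        then have "c = {x}" using self[OF xc] x by auto
        then show False using xF xP x F_def by auto
      qed
      then show "p dvd card c" using i by simp
    qed
    show "\<forall>c1\<in>?orb ` D. \<forall>c2\<in>?orb ` D. c1 \<noteq> c2 \<longrightarrow> c1 \<inter> c2 = {}"
    proof (intro ballI impI)
      fix c1 c2 assume c1: "c1 \<in> ?orb ` D" and c2: "c2 \<in> ?orb ` D" and ne: "c1 \<noteq> c2"
      obtain x1 where x1: "x1 \<in> D" "c1 = ?orb x1" using c1 by auto
      obtain x2 where x2: "x2 \<in> D" "c2 = ?orb x2" using c2 by auto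
      have x1c: "x1 \<in> carrier G" and x2c: "x2 \<in> carrier G" using x1 x2 D_def PG by auto
      show "c1 \<inter> c2 = {}"
      proof (rule ccontr)
        assume "c1 \<inter> c2 \<noteq> {}"
        then obtain z where z: "z \<in> c1" "z \<in> c2" by auto
        have "?orb z = c1" using orbit_same[OF x1c] z x1 by simp
        moreover have "?orb z = c2" using orbit_same[OF x2c] z x2 by simp
        ultimately show False using ne by simp
      qed
    qed
  qed
  then have pD: "p dvd card D" using D_union by simp
  have FP: "F \<subseteq> P" using F_def by auto
  have cP: "card P = card F + card D" using FP finP D_def
    by (metis card_Diff_subset card_mono diff_add_inverse2 finite_subset le_add_diff_inverse)
  have pP: "p dvd card P" using P(2) a1 by (simp add: dvd_power)
  have pF: "p dvd card F" using pP pD cP by (metis dvd_add_left_iff)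
  have oneF: "\<one> \<in> F"
  proof -
    have "\<one> \<in> P" using P(3) by simp
    moreover have "?orb \<one> = {\<one>}"
    proof -
      have "{g \<otimes> \<one> \<otimes> inv g | g. g \<in> carrier G} = {\<one>}"
      proof
        show "{g \<otimes> \<one> \<otimes> inv g | g. g \<in> carrier G} \<subseteq> {\<one>}" by auto
        show "{\<one>} \<subseteq> {g \<otimes> \<one> \<otimes> inv g | g. g \<in> carrier G}"
        proof
          fix w assume "w \<in> {\<one>}"
          then have "w = \<one> \<otimes> \<one> \<otimes> inv \<one>" by simp
          then show "w \<in> {g \<otimes> \<one> \<otimes> inv g | g. g \<in> carrier G}" by blast
        qed
      qed
      then show ?thesis using orbit_conj[OF one_closed] by simp
    qed
    ultimately show ?thesis by (simp add: F_def)
  qed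
  have finF: "finite F" using FP finP finite_subset by blast
  have "card F \<noteq> 0" using oneF finF by auto
  then have "card F \<ge> p" using pF by (simp add: dvd_imp_le)
  then have "card F \<ge> 2" using prime_ge_2_nat[OF p(1)] by simp
  then obtain z where z: "z \<in> F" "z \<noteq> \<one>"
  proof -
    assume h: "\<And>z. z \<in> F \<Longrightarrow> z \<noteq> \<one> \<Longrightarrow> thesis"
    show thesis
    proof (rule ccontr)
      assume "\<not> thesis"
      then have "F \<subseteq> {\<one>}" using h by blast
      then have "card F \<le> card {\<one>}" by (intro card_mono) auto
      then have "card F \<le> 1" by simp
      then show False using \<open>card F \<ge> 2\<close> by simp
    qed
  qed
  have zc: "z \<in> carrier G" using z(1) F_def PG by auto
  have zo: "?orb z = {z}" using z(1) F_def by simp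
  have "\<forall>g\<in>carrier G. z \<otimes> g = g \<otimes> z"
  proof
    fix g assume g: "g \<in> carrier G"
    have "g \<otimes> z \<otimes> inv g \<in> ?orb z" using orbit_conj[OF zc] g by auto
    then have e: "g \<otimes> z \<otimes> inv g = z" using zo by simp
    have "g \<otimes> z = (g \<otimes> z \<otimes> inv g) \<otimes> g" using g zc by (simp add: m_assoc)
    then show "z \<otimes> g = g \<otimes> z" using e by simp
  qed
  then show ?thesis using zc z(2) by blast
qed



definition cent :: "('a, 'b) monoid_scheme \<Rightarrow> 'a set" where
  "cent Q = {z \<in> carrier Q. \<forall>g\<in>carrier Q. z \<otimes>\<^bsub>Q\<^esub> g = g \<otimes>\<^bsub>Q\<^esub> z}"

lemma (in group) cent_normal: "cent G \<lhd> G"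
proof (rule normal_invI)
  show "subgroup (cent G) G"
  proof
    show "cent G \<subseteq> carrier G" unfolding cent_def by blast
    show "\<one> \<in> cent G" unfolding cent_def by simp
    fix x y assume x: "x \<in> cent G" and y: "y \<in> cent G"
    have xc: "x \<in> carrier G" "y \<in> carrier G" using x y unfolding cent_def by blast+
    have ex: "\<And>g. g \<in> carrier G \<Longrightarrow> x \<otimes> g = g \<otimes> x" using x unfolding cent_def by blast
    have ey: "\<And>g. g \<in> carrier G \<Longrightarrow> y \<otimes> g = g \<otimes> y" using y unfolding cent_def by blast
    have "\<forall>g\<in>carrier G. x \<otimes> y \<otimes> g = g \<otimes> (x \<otimes> y)"
    proof
      fix g assume g: "g \<in> carrier G"
      have "x \<otimes> y \<otimes> g = x \<otimes> (y \<otimes> g)" using g xc by (simp add: m_assoc)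
      also have "\<dots> = x \<otimes> (g \<otimes> y)" using ey[OF g] by simp
      also have "\<dots> = (x \<otimes> g) \<otimes> y" using g xc by (simp add: m_assoc)
      also have "\<dots> = (g \<otimes> x) \<otimes> y" using ex[OF g] by simp
      also have "\<dots> = g \<otimes> (x \<otimes> y)" using g xc by (simp add: m_assoc)
      finally show "x \<otimes> y \<otimes> g = g \<otimes> (x \<otimes> y)" .
    qed
    then show "x \<otimes> y \<in> cent G" using xc unfolding cent_def by simp
  next
    fix x assume x: "x \<in> cent G"
    have xc: "x \<in> carrier G" using x unfolding cent_def by blast
    have ex: "\<And>g. g \<in> carrier G \<Longrightarrow> x \<otimes> g = g \<otimes> x" using x unfolding cent_def by blast
    have "\<forall>g\<in>carrier G. inv x \<otimes> g = g \<otimes> inv x"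
    proof
      fix g assume g: "g \<in> carrier G"
      have "inv x \<otimes> g = inv x \<otimes> (g \<otimes> x) \<otimes> inv x" using g xc by (simp add: m_assoc)
      also have "\<dots> = inv x \<otimes> (x \<otimes> g) \<otimes> inv x" using ex[OF g] by simp
      also have "\<dots> = g \<otimes> inv x" using g xc by simp
      finally show "inv x \<otimes> g = g \<otimes> inv x" .
    qed
    then show "inv x \<in> cent G" using xc unfolding cent_def by simp
  qed
next
  fix x h assume x: "x \<in> carrier G" and h: "h \<in> cent G"
  have hc: "h \<in> carrier G" using h unfolding cent_def by blast
  have eh: "h \<otimes> x = x \<otimes> h" using h x unfolding cent_def by blast
  have "x \<otimes> h \<otimes> inv x = h \<otimes> x \<otimes> inv x" using eh by simp
  also have "\<dots> = h" using hc x by (simp add: m_assoc)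
  finally show "x \<otimes> h \<otimes> inv x \<in> cent G" using h by simp
qed

lemma (in normal) central_mod_iff:
  assumes x: "x \<in> carrier G"
  shows "H #> x \<in> cent (G Mod H) \<longleftrightarrow> (\<forall>g\<in>carrier G. x \<otimes> g \<otimes> inv x \<otimes> inv g \<in> H)"
proof -
  interpret Q: group "G Mod H" by (rule factorgroup_is_group)
  have xq: "H #> x \<in> carrier (G Mod H)" using x carrier_FactGroup[of G H] by auto
  have "H #> x \<in> cent (G Mod H) \<longleftrightarrow> (\<forall>g\<in>carrier G. H #> (x \<otimes> g) = H #> (g \<otimes> x))"
    using xq x carrier_FactGroup[of G H] by (auto simp: cent_def rcos_sum)
  also have "\<dots> \<longleftrightarrow> (\<forall>g\<in>carrier G. x \<otimes> g \<otimes> inv x \<otimes> inv g \<in> H)"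
  proof (intro ball_cong refl)
    fix g assume g: "g \<in> carrier G"
    have "H #> (x \<otimes> g) = H #> (g \<otimes> x) \<longleftrightarrow> (x \<otimes> g) \<otimes> inv (g \<otimes> x) \<in> H"
      using rcos_eq_iff[OF is_subgroup] x g by simp
    moreover have "(x \<otimes> g) \<otimes> inv (g \<otimes> x) = x \<otimes> g \<otimes> inv x \<otimes> inv g"
      using x g by (simp add: inv_mult_group m_assoc)
    ultimately show "H #> (x \<otimes> g) = H #> (g \<otimes> x) \<longleftrightarrow> x \<otimes> g \<otimes> inv x \<otimes> inv g \<in> H" by simp
  qed
  finally show ?thesis .
qed

lemma (in normal) upper_step_normal:
  "{x \<in> carrier G. \<forall>g\<in>carrier G. x \<otimes> g \<otimes> inv x \<otimes> inv g \<in> H} \<lhd> G"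
proof -
  interpret Q: group "G Mod H" by (rule factorgroup_is_group)
  have n: "\<Union>(cent (G Mod H)) \<lhd> G" using factgroup_subgroup_union_normal Q.cent_normal by blast
  have "\<Union>(cent (G Mod H)) = {x \<in> carrier G. H #> x \<in> cent (G Mod H)}"
    using factgroup_subgroup_union_char normal_imp_subgroup[OF Q.cent_normal] by blast
  also have "\<dots> = {x \<in> carrier G. \<forall>g\<in>carrier G. x \<otimes> g \<otimes> inv x \<otimes> inv g \<in> H}"
    using central_mod_iff by blast
  finally show ?thesis using n by simp
qed

lemma (in normal) upper_step_sub:
  "H \<subseteq> {x \<in> carrier G. \<forall>g\<in>carrier G. x \<otimes> g \<otimes> inv x \<otimes> inv g \<in> H}"
proof
  fix x assume x: "x \<in> H"
  have xc: "x \<in> carrier G" using x subset by auto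
  have "\<forall>g\<in>carrier G. x \<otimes> g \<otimes> inv x \<otimes> inv g \<in> H"
  proof
    fix g assume g: "g \<in> carrier G"
    have "g \<otimes> inv x \<otimes> inv g \<in> H" using inv_op_closed2 g m_inv_closed[OF x] by simp
    then have "x \<otimes> (g \<otimes> inv x \<otimes> inv g) \<in> H" using x by simp
    then show "x \<otimes> g \<otimes> inv x \<otimes> inv g \<in> H" using xc g by (simp add: m_assoc)
  qed
  then show "x \<in> {x \<in> carrier G. \<forall>g\<in>carrier G. x \<otimes> g \<otimes> inv x \<otimes> inv g \<in> H}" using xc by simp
qed

lemma (in normal) allexp_Mod_finite:
  assumes ae: "allexp G" and fin: "finite (carrier G)"
  shows "allexp (G Mod H)" and "finite (carrier (G Mod H))"
proof -
  show f: "finite (carrier (G Mod H))"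
    using fin rcosets_subset_PowG[OF is_subgroup] by (simp add: FactGroup_def finite_subset)
  show "allexp (G Mod H)"
    using allexp_Mod[OF _ f] ae unfolding allexp_def by blast
qed

lemma (in normal) upper_step_grows:
  assumes ae: "allexp G" and fin: "finite (carrier G)" and ne: "H \<noteq> carrier G"
  shows "\<exists>x\<in>carrier G. x \<notin> H \<and> (\<forall>g\<in>carrier G. x \<otimes> g \<otimes> inv x \<otimes> inv g \<in> H)"
proof -
  interpret Q: group "G Mod H" by (rule factorgroup_is_group)
  obtain y where y: "y \<in> carrier G" "y \<notin> H" using ne subset by auto
  have "H #> y \<noteq> H"
  proof
    assume "H #> y = H"
    then have "y \<in> H" using rcos_self[OF y(1) is_subgroup] by simp
    then show False using y by simp
  qed
  moreover have "H #> y \<in> carrier (G Mod H)" using y carrier_FactGroup[of G H] by auto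
  ultimately have nt: "carrier (G Mod H) \<noteq> {\<one>\<^bsub>G Mod H\<^esub>}" by auto
  obtain Z where Z: "Z \<in> carrier (G Mod H)" "Z \<noteq> \<one>\<^bsub>G Mod H\<^esub>"
      "\<forall>g\<in>carrier (G Mod H). Z \<otimes>\<^bsub>G Mod H\<^esub> g = g \<otimes>\<^bsub>G Mod H\<^esub> Z"
    using Q.allexp_center[OF allexp_Mod_finite[OF ae fin] nt] by blast
  obtain x where x: "x \<in> carrier G" "Z = H #> x" using Z(1) carrier_FactGroup[of G H] by auto
  have "x \<notin> H"
  proof
    assume "x \<in> H"
    then have "Z = H" using x rcos_const by simp
    then show False using Z(2) by simp
  qed
  moreover have "H #> x \<in> cent (G Mod H)" using Z x by (simp add: cent_def)
  ultimately show ?thesis using central_mod_iff x by blast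
qed

fun zeta :: "('a, 'b) monoid_scheme \<Rightarrow> nat \<Rightarrow> 'a set" where
  "zeta Q 0 = {\<one>\<^bsub>Q\<^esub>}"
| "zeta Q (Suc i) = {x \<in> carrier Q. \<forall>g\<in>carrier Q. x \<otimes>\<^bsub>Q\<^esub> g \<otimes>\<^bsub>Q\<^esub> inv\<^bsub>Q\<^esub> x \<otimes>\<^bsub>Q\<^esub> inv\<^bsub>Q\<^esub> g \<in> zeta Q i}"

lemma (in group) zeta_normal: "zeta G i \<lhd> G"
proof (induction i)
  case 0 then show ?case using one_is_normal by simp
next
  case (Suc i)
  interpret N: normal "zeta G i" G using Suc .
  show ?case using N.upper_step_normal by simp
qed

lemma (in group) zeta_top:
  assumes ae: "allexp G" and fin: "finite (carrier G)"
  shows "zeta G i = carrier G \<or> i < card (zeta G i)"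
proof (induction i)
  case 0 then show ?case by simp
next
  case (Suc i)
  interpret N: normal "zeta G i" G using zeta_normal .
  have sub: "zeta G i \<subseteq> zeta G (Suc i)" using N.upper_step_sub by simp
  have sub2: "zeta G (Suc i) \<subseteq> carrier G" by (simp only: zeta.simps) blast
  show ?case
  proof (cases "zeta G i = carrier G")
    case True
    then have "zeta G (Suc i) = carrier G" using sub sub2 by blast
    then show ?thesis by blast
  next
    case False
    then have lt: "i < card (zeta G i)" using Suc by simp
    obtain x where x: "x \<in> carrier G" "x \<notin> zeta G i" "\<forall>g\<in>carrier G. x \<otimes> g \<otimes> inv x \<otimes> inv g \<in> zeta G i"
      using N.upper_step_grows[OF ae fin False] by blast
    have "x \<in> zeta G (Suc i)" using x(1,3) by simp
    then have "zeta G i \<subset> zeta G (Suc i)" using sub x(2) by blast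
    moreover have "finite (zeta G (Suc i))" using sub2 fin finite_subset by blast
    ultimately have "card (zeta G i) < card (zeta G (Suc i))" by (rule psubset_card_mono[rotated])
    then show ?thesis using lt by simp
  qed
qed

lemma (in group) lower_central_in_zeta:
  assumes top: "zeta G n = carrier G"
  shows "k \<le> n \<Longrightarrow> lower_central G k \<subseteq> zeta G (n - k)"
proof (induction k)
  case 0 then show ?case using top by simp
next
  case (Suc k)
  then have IH: "lower_central G k \<subseteq> zeta G (Suc (n - Suc k))" by (simp add: Suc_diff_Suc)
  have "commutators G (lower_central G k) (carrier G) \<subseteq> zeta G (n - Suc k)"
    using IH by (auto simp: commutators_def)
  then show ?case
    using generate_subgroup_incl[OF _ normal_imp_subgroup[OF zeta_normal]] commutators_def by simp
qed

lemma (in group) one_lower_central: "\<one> \<in> lower_central G k"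
  by (cases k) (auto intro: generate.one)

lemma (in group) allexp_lower_central:
  assumes ae: "allexp G" and fin: "finite (carrier G)"
  shows "\<exists>n. lower_central G n = {\<one>}"
proof -
  let ?n = "card (carrier G)"
  have "zeta G ?n = carrier G"
  proof -
    have "zeta G ?n \<subseteq> carrier G" by (cases ?n) auto
    then have "card (zeta G ?n) \<le> ?n" using fin card_mono by blast
    then show ?thesis using zeta_top[OF ae fin, of ?n] by simp
  qed
  then have "lower_central G ?n \<subseteq> zeta G 0" using lower_central_in_zeta[of ?n ?n] by simp
  then have "lower_central G ?n = {\<one>}" using one_lower_central by auto
  then show ?thesis by blast
qed



lemma AB_equiv:
  "carrier G = S_set G \<longleftrightarrow> (\<forall>H. finite_index G H \<longrightarrow> exponential G H)"
proof
  assume e: "carrier G = S_set G"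
  show "\<forall>H. finite_index G H \<longrightarrow> exponential G H"
  proof (intro allI impI)
    fix H assume fi: "finite_index G H"
    have "\<forall>x\<in>carrier G. x [^]\<^bsub>G\<^esub> group_index G H \<in> H"
    proof
      fix x assume "x \<in> carrier G"
      then have "x \<in> S_set G" using e by simp
      then show "x [^]\<^bsub>G\<^esub> group_index G H \<in> H" using fi unfolding S_set_def by blast
    qed
    then show "exponential G H" using fi unfolding exponential_def by blast
  qed
next
  assume a: "\<forall>H. finite_index G H \<longrightarrow> exponential G H"
  show "carrier G = S_set G"
    using a unfolding S_set_def exponential_def by blast
qed

lemma (in group) B_imp_C:
  assumes B: "\<forall>H. finite_index G H \<longrightarrow> exponential G H"
    and N: "N \<lhd> G" and fin: "finite (carrier (G Mod N))"
  shows "nilpotent_group (G Mod N)"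
proof -
  interpret N: normal N G using N .
  interpret Q: group "G Mod N" by (rule N.factorgroup_is_group)
  have "allexp (G Mod N)"
  proof (rule N.allexp_Mod[OF _ fin])
    fix K assume K: "subgroup K G" and fK: "finite (rcosets K)"
    then have "finite_index G K" by (simp add: finite_index_def)
    then have "exponential G K" using B by blast
    then show "\<forall>x\<in>carrier G. x [^] card (rcosets K) \<in> K"
      unfolding exponential_def group_index_def by blast
  qed
  then obtain n where "lower_central (G Mod N) n = {\<one>\<^bsub>G Mod N\<^esub>}"
    using Q.allexp_lower_central fin by blast
  then show ?thesis unfolding nilpotent_group_def using Q.is_group by blast
qed



lemma finite_image_factor:
  assumes "\<forall>x\<in>A. \<forall>y\<in>A. f x = f y \<longrightarrow> g x = g y" "finite (f ` A)"
  shows "finite (g ` A)"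
proof -
  have "g ` A = (\<lambda>b. g (inv_into A f b)) ` (f ` A)"
  proof
    show "g ` A \<subseteq> (\<lambda>b. g (inv_into A f b)) ` (f ` A)"
    proof
      fix z assume "z \<in> g ` A"
      then obtain x where x: "x \<in> A" "z = g x" by auto
      have "inv_into A f (f x) \<in> A" "f (inv_into A f (f x)) = f x" using x by (auto intro: inv_into_into f_inv_into_f)
      then have "g (inv_into A f (f x)) = g x" using assms(1) x by blast
      then show "z \<in> (\<lambda>b. g (inv_into A f b)) ` (f ` A)" using x by force
    qed
    show "(\<lambda>b. g (inv_into A f b)) ` (f ` A) \<subseteq> g ` A" by (auto intro: inv_into_into)
  qed
  then show ?thesis using assms(2) by simp
qed

lemma (in group) core_exists:
  assumes fi: "finite_index G H"
  shows "\<exists>K. K \<lhd> G \<and> K \<subseteq> H \<and> finite (rcosets K)"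
proof -
  have H: "subgroup H G" and fH: "finite (rcosets H)" using fi by (auto simp: finite_index_def)
  define K where "K = {x \<in> carrier G. \<forall>y\<in>carrier G. y \<otimes> x \<otimes> inv y \<in> H}"
  have Kc: "K \<subseteq> carrier G" by (auto simp: K_def)
  have KH: "K \<subseteq> H"
  proof
    fix x assume "x \<in> K"
    then have xc: "x \<in> carrier G" and "\<forall>y\<in>carrier G. y \<otimes> x \<otimes> inv y \<in> H" by (auto simp: K_def)
    then have "\<one> \<otimes> x \<otimes> inv \<one> \<in> H" by blast
    then show "x \<in> H" using xc by simp
  qed
  have sK: "subgroup K G"
  proof
    show "K \<subseteq> carrier G" by (rule Kc)
    show "\<one> \<in> K" using subgroup.one_closed[OF H] by (auto simp: K_def)
    fix x y assume x: "x \<in> K" and y: "y \<in> K"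
    have xc: "x \<in> carrier G" and yc: "y \<in> carrier G" using x y Kc by auto
    have "\<forall>z\<in>carrier G. z \<otimes> (x \<otimes> y) \<otimes> inv z \<in> H"
    proof
      fix z assume z: "z \<in> carrier G"
      have "z \<otimes> x \<otimes> inv z \<in> H" "z \<otimes> y \<otimes> inv z \<in> H" using x y z by (auto simp: K_def)
      then have "(z \<otimes> x \<otimes> inv z) \<otimes> (z \<otimes> y \<otimes> inv z) \<in> H" using subgroup.m_closed[OF H] by blast
      moreover have "(z \<otimes> x \<otimes> inv z) \<otimes> (z \<otimes> y \<otimes> inv z) = z \<otimes> (x \<otimes> y) \<otimes> inv z"
        using xc yc z by (simp add: m_assoc)
      ultimately show "z \<otimes> (x \<otimes> y) \<otimes> inv z \<in> H" by simp
    qed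
    then show "x \<otimes> y \<in> K" using xc yc by (simp add: K_def)
  next
    fix x assume x: "x \<in> K"
    have xc: "x \<in> carrier G" using x Kc by auto
    have "\<forall>z\<in>carrier G. z \<otimes> inv x \<otimes> inv z \<in> H"
    proof
      fix z assume z: "z \<in> carrier G"
      have "z \<otimes> x \<otimes> inv z \<in> H" using x z by (auto simp: K_def)
      then have "inv (z \<otimes> x \<otimes> inv z) \<in> H" using subgroup.m_inv_closed[OF H] by blast
      moreover have "inv (z \<otimes> x \<otimes> inv z) = z \<otimes> inv x \<otimes> inv z"
        using xc z by (simp add: inv_mult_group m_assoc)
      ultimately show "z \<otimes> inv x \<otimes> inv z \<in> H" by simp
    qed
    then show "inv x \<in> K" using xc by (simp add: K_def)
  qed
  have nK: "K \<lhd> G"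
  proof (rule normal_invI[OF sK])
    fix x h assume x: "x \<in> carrier G" and h: "h \<in> K"
    have hc: "h \<in> carrier G" using h Kc by auto
    have "\<forall>y\<in>carrier G. y \<otimes> (x \<otimes> h \<otimes> inv x) \<otimes> inv y \<in> H"
    proof
      fix y assume y: "y \<in> carrier G"
      have "(y \<otimes> x) \<otimes> h \<otimes> inv (y \<otimes> x) \<in> H" using h y x by (auto simp: K_def)
      moreover have "(y \<otimes> x) \<otimes> h \<otimes> inv (y \<otimes> x) = y \<otimes> (x \<otimes> h \<otimes> inv x) \<otimes> inv y"
        using x y hc by (simp add: inv_mult_group m_assoc)
      ultimately show "y \<otimes> (x \<otimes> h \<otimes> inv x) \<otimes> inv y \<in> H" by simp
    qed
    then show "x \<otimes> h \<otimes> inv x \<in> K" using x hc by (simp add: K_def)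
  qed
  define f where "f = (\<lambda>x. \<lambda>A\<in>rcosets H. A #> x)"
  have feq: "f x = f y \<longrightarrow> K #> x = K #> y" if x: "x \<in> carrier G" and y: "y \<in> carrier G" for x y
  proof
    assume e: "f x = f y"
    have "\<forall>z\<in>carrier G. z \<otimes> (x \<otimes> inv y) \<otimes> inv z \<in> H"
    proof
      fix z assume z: "z \<in> carrier G"
      have "H #> z \<in> rcosets H" using z by (rule rcosetsI[OF subgroup.subset[OF H]])
      moreover have "f x (H #> z) = f y (H #> z)" using e by simp
      ultimately have "H #> z #> x = H #> z #> y" by (simp add: f_def)
      then have "H #> (z \<otimes> x) = H #> (z \<otimes> y)" using z x y subgroup.subset[OF H] by (simp add: coset_mult_assoc)
      then have "(z \<otimes> x) \<otimes> inv (z \<otimes> y) \<in> H" using rcos_eq_iff[OF H] z x y by simp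
      moreover have "(z \<otimes> x) \<otimes> inv (z \<otimes> y) = z \<otimes> (x \<otimes> inv y) \<otimes> inv z"
        using z x y by (simp add: inv_mult_group m_assoc)
      ultimately show "z \<otimes> (x \<otimes> inv y) \<otimes> inv z \<in> H" by simp
    qed
    then have "x \<otimes> inv y \<in> K" using x y by (simp add: K_def)
    then show "K #> x = K #> y" using rcos_eq_iff[OF sK x y] by simp
  qed
  have "f ` carrier G \<subseteq> (rcosets H \<rightarrow>\<^sub>E rcosets H)"
  proof
    fix F assume "F \<in> f ` carrier G"
    then obtain x where x: "x \<in> carrier G" "F = f x" by auto
    have "A #> x \<in> rcosets H" if A: "A \<in> rcosets H" for A
    proof -
      obtain z where z: "z \<in> carrier G" "A = H #> z" using A by (auto simp: RCOSETS_def)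
      then have "A #> x = H #> (z \<otimes> x)" using x subgroup.subset[OF H] by (simp add: coset_mult_assoc)
      then show ?thesis using z x by (simp add: rcosetsI[OF subgroup.subset[OF H]])
    qed
    then show "F \<in> (rcosets H \<rightarrow>\<^sub>E rcosets H)" using x by (auto simp: f_def)
  qed
  then have "finite (f ` carrier G)" using fH by (meson finite_PiE finite_subset)
  then have "finite ((\<lambda>x. K #> x) ` carrier G)" using finite_image_factor[of "carrier G" f] feq by blast
  then have "finite (rcosets K)" by (simp add: rcosets_eq_image)
  then show ?thesis using nK KH by blast
qed

lemma (in group) comm_conj:
  assumes "g \<in> carrier G" "h \<in> carrier G" "k \<in> carrier G"
  shows "g \<otimes> (h \<otimes> k \<otimes> inv h \<otimes> inv k) \<otimes> inv g =
         (g \<otimes> h \<otimes> inv g) \<otimes> (g \<otimes> k \<otimes> inv g) \<otimes> inv (g \<otimes> h \<otimes> inv g) \<otimes> inv (g \<otimes> k \<otimes> inv g)"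
  using assms by (simp add: inv_mult_group m_assoc)

lemma (in group) lower_central_normal: "lower_central G k \<lhd> G"
proof (induction k)
  case 0 then show ?case using normal_invI[OF subgroup_self] by auto
next
  case (Suc k)
  have sub: "lower_central G k \<subseteq> carrier G" using normal_imp_subgroup[OF Suc] subgroup.subset by blast
  have cs: "commutators G (lower_central G k) (carrier G) \<subseteq> carrier G"
    using sub by (auto simp: commutators_def)
  show ?case unfolding lower_central.simps
  proof (rule normal_generateI[OF cs])
    fix c g assume c: "c \<in> commutators G (lower_central G k) (carrier G)" and g: "g \<in> carrier G"
    obtain h k' where hk: "h \<in> lower_central G k" "k' \<in> carrier G" "c = h \<otimes> k' \<otimes> inv h \<otimes> inv k'"
      using c by (auto simp: commutators_def)
    have hc: "h \<in> carrier G" using hk sub by auto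
    have "g \<otimes> h \<otimes> inv g \<in> lower_central G k" using normal_invE(2)[OF Suc g hk(1)] .
    moreover have "g \<otimes> k' \<otimes> inv g \<in> carrier G" using g hk by simp
    ultimately have "(g \<otimes> h \<otimes> inv g) \<otimes> (g \<otimes> k' \<otimes> inv g) \<otimes> inv (g \<otimes> h \<otimes> inv g) \<otimes> inv (g \<otimes> k' \<otimes> inv g)
       \<in> commutators G (lower_central G k) (carrier G)" unfolding commutators_def by blast
    then show "g \<otimes> c \<otimes> inv g \<in> commutators G (lower_central G k) (carrier G)"
      using comm_conj[OF g hc hk(2)] hk(3) by simp
  qed
qed

lemma (in group) lower_central_sub_carrier: "lower_central G k \<subseteq> carrier G"
  using normal_imp_subgroup[OF lower_central_normal] subgroup.subset by blast

lemma (in group) comm_in_lower_central: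
  assumes "h \<in> lower_central G k" "g \<in> carrier G"
  shows "h \<otimes> g \<otimes> inv h \<otimes> inv g \<in> lower_central G (Suc k)"
  using assms by (auto simp: commutators_def intro!: generate.incl)

lemma (in group) lower_central_mono: "lower_central G (Suc k) \<subseteq> lower_central G k"
proof -
  have N: "lower_central G k \<lhd> G" by (rule lower_central_normal)
  have "commutators G (lower_central G k) (carrier G) \<subseteq> lower_central G k"
  proof
    fix c assume "c \<in> commutators G (lower_central G k) (carrier G)"
    then obtain h g where hg: "h \<in> lower_central G k" "g \<in> carrier G" "c = h \<otimes> g \<otimes> inv h \<otimes> inv g"
      by (auto simp: commutators_def)
    have hc: "h \<in> carrier G" using hg lower_central_sub_carrier by auto
    have "g \<otimes> inv h \<otimes> inv g \<in> lower_central G k"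
      using normal_invE(2)[OF N hg(2) subgroup.m_inv_closed[OF normal_imp_subgroup[OF N] hg(1)]] .
    then have "h \<otimes> (g \<otimes> inv h \<otimes> inv g) \<in> lower_central G k"
      using subgroup.m_closed[OF normal_imp_subgroup[OF N] hg(1)] by simp
    then show "c \<in> lower_central G k" using hg hc by (simp add: m_assoc)
  qed
  then show ?thesis using generate_subgroup_incl[OF _ normal_imp_subgroup[OF N]] by simp
qed



lemma (in normal) lower_central_Mod:
  "x \<in> lower_central G k \<Longrightarrow> H #> x \<in> lower_central (G Mod H) k"
proof (induction k arbitrary: x)
  case 0 then show ?case using carrier_FactGroup[of G H] by auto
next
  case (Suc k)
  interpret Q: group "G Mod H" by (rule factorgroup_is_group)
  have hom: "group_hom G (G Mod H) (\<lambda>a. H #> a)" by (rule Mod_group_hom)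
  let ?Hb = "lower_central (G Mod H) (Suc k)"
  have Hb: "subgroup ?Hb (G Mod H)" using normal_imp_subgroup[OF Q.lower_central_normal] .
  have "commutators G (lower_central G k) (carrier G) \<subseteq> \<Union>?Hb"
  proof
    fix c assume "c \<in> commutators G (lower_central G k) (carrier G)"
    then obtain h g where hg: "h \<in> lower_central G k" "g \<in> carrier G" "c = h \<otimes> g \<otimes> inv h \<otimes> inv g"
      by (auto simp: commutators_def)
    have hc: "h \<in> carrier G" using hg lower_central_sub_carrier by auto
    have gq: "H #> g \<in> carrier (G Mod H)" using hg carrier_FactGroup[of G H] by auto
    have "(H #> h) \<otimes>\<^bsub>G Mod H\<^esub> (H #> g) \<otimes>\<^bsub>G Mod H\<^esub> inv\<^bsub>G Mod H\<^esub> (H #> h) \<otimes>\<^bsub>G Mod H\<^esub> inv\<^bsub>G Mod H\<^esub> (H #> g) \<in> ?Hb"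
      using Q.comm_in_lower_central[OF Suc.IH[OF hg(1)] gq] .
    moreover have "(H #> h) \<otimes>\<^bsub>G Mod H\<^esub> (H #> g) \<otimes>\<^bsub>G Mod H\<^esub> inv\<^bsub>G Mod H\<^esub> (H #> h) \<otimes>\<^bsub>G Mod H\<^esub> inv\<^bsub>G Mod H\<^esub> (H #> g) = H #> c"
      using hg hc by (simp add: group_hom.hom_mult[OF hom] group_hom.hom_inv[OF hom])
    ultimately have "H #> c \<in> ?Hb" by simp
    moreover have "c \<in> carrier G" using hg hc by simp
    ultimately show "c \<in> \<Union>?Hb" using quot_corr(2)[OF Hb] by blast
  qed
  then have "lower_central G (Suc k) \<subseteq> \<Union>?Hb"
    using generate_subgroup_incl[OF _ quot_corr(1)[OF Hb]] by simp
  then show ?case using Suc.prems quot_corr(2)[OF Hb] lower_central_sub_carrier by blast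
qed

lemma (in group) subgroup_setmult_normal:
  assumes H: "subgroup H G" and N: "N \<lhd> G"
  shows "subgroup (H <#> N) G"
proof
  have Hc: "H \<subseteq> carrier G" using H subgroup.subset by blast
  have Nc: "N \<subseteq> carrier G" using normal_imp_subgroup[OF N] subgroup.subset by blast
  show "H <#> N \<subseteq> carrier G" using setmult_subset_G[OF Hc Nc] .
  show "\<one> \<in> H <#> N"
    using subgroup.one_closed[OF H] subgroup.one_closed[OF normal_imp_subgroup[OF N]]
    unfolding set_mult_def by force
  fix x y assume x: "x \<in> H <#> N" and y: "y \<in> H <#> N"
  obtain h1 n1 where a: "h1 \<in> H" "n1 \<in> N" "x = h1 \<otimes> n1" using x unfolding set_mult_def by blast
  obtain h2 n2 where b: "h2 \<in> H" "n2 \<in> N" "y = h2 \<otimes> n2" using y unfolding set_mult_def by blast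
  have c: "h1 \<in> carrier G" "n1 \<in> carrier G" "h2 \<in> carrier G" "n2 \<in> carrier G" using a b Hc Nc by auto
  have "inv h2 \<otimes> n1 \<otimes> inv (inv h2) \<in> N" using normal_invE(2)[OF N inv_closed[OF c(3)] a(2)] .
  then have n3: "inv h2 \<otimes> n1 \<otimes> h2 \<in> N" using c by simp
  have "x \<otimes> y = (h1 \<otimes> h2) \<otimes> ((inv h2 \<otimes> n1 \<otimes> h2) \<otimes> n2)" using a b c by (simp add: m_assoc)
  moreover have "h1 \<otimes> h2 \<in> H" using a b subgroup.m_closed[OF H] by blast
  moreover have "(inv h2 \<otimes> n1 \<otimes> h2) \<otimes> n2 \<in> N" using n3 b subgroup.m_closed[OF normal_imp_subgroup[OF N]] by blast
  ultimately show "x \<otimes> y \<in> H <#> N" unfolding set_mult_def by blast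
next
  fix x assume x: "x \<in> H <#> N"
  have Hc: "H \<subseteq> carrier G" using H subgroup.subset by blast
  have Nc: "N \<subseteq> carrier G" using normal_imp_subgroup[OF N] subgroup.subset by blast
  obtain h n where a: "h \<in> H" "n \<in> N" "x = h \<otimes> n" using x unfolding set_mult_def by blast
  have c: "h \<in> carrier G" "n \<in> carrier G" using a Hc Nc by auto
  have "h \<otimes> inv n \<otimes> inv h \<in> N"
    using normal_invE(2)[OF N c(1) subgroup.m_inv_closed[OF normal_imp_subgroup[OF N] a(2)]] .
  moreover have "inv x = inv h \<otimes> (h \<otimes> inv n \<otimes> inv h)" using a c by (simp add: inv_mult_group m_assoc)
  moreover have "inv h \<in> H" using subgroup.m_inv_closed[OF H a(1)] .
  ultimately show "inv x \<in> H <#> N" unfolding set_mult_def by blast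
qed

lemma (in group) chain_step:
  assumes H: "subgroup H G"
  shows "H <#> lower_central G (Suc j) \<lhd> G\<lparr>carrier := H <#> lower_central G j\<rparr>"
proof -
  let ?L = "lower_central G j" and ?L' = "lower_central G (Suc j)"
  let ?A = "H <#> ?L" and ?B = "H <#> ?L'"
  have NL: "?L \<lhd> G" by (rule lower_central_normal)
  have NL': "?L' \<lhd> G" by (rule lower_central_normal)
  have sA: "subgroup ?A G" using subgroup_setmult_normal[OF H NL] .
  have sB: "subgroup ?B G" using subgroup_setmult_normal[OF H NL'] .
  have BA: "?B \<subseteq> ?A" using lower_central_mono unfolding set_mult_def by blast
  have Hc: "H \<subseteq> carrier G" using H subgroup.subset by blast
  have Lc: "?L \<subseteq> carrier G" "?L' \<subseteq> carrier G"
    by (rule lower_central_sub_carrier)+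
  interpret A: group "G\<lparr>carrier := ?A\<rparr>" using subgroup.subgroup_is_group[OF sA is_group] .
  have sBA: "subgroup ?B (G\<lparr>carrier := ?A\<rparr>)" using subgroup_incl[OF sB sA BA] .
  have cH: "h1 \<otimes> b \<otimes> inv h1 \<in> ?B" if h1: "h1 \<in> H" and b: "b \<in> ?B" for h1 b
  proof -
    obtain h n where a: "h \<in> H" "n \<in> ?L'" "b = h \<otimes> n" using b unfolding set_mult_def by blast
    have c: "h1 \<in> carrier G" "h \<in> carrier G" "n \<in> carrier G" using a h1 Hc Lc by auto
    have "h1 \<otimes> b \<otimes> inv h1 = (h1 \<otimes> h \<otimes> inv h1) \<otimes> (h1 \<otimes> n \<otimes> inv h1)" using a c by (simp add: m_assoc)
    moreover have "h1 \<otimes> h \<otimes> inv h1 \<in> H"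
      using h1 a subgroup.m_closed[OF H] subgroup.m_inv_closed[OF H] by blast
    moreover have "h1 \<otimes> n \<otimes> inv h1 \<in> ?L'" using normal_invE(2)[OF NL' c(1) a(2)] .
    ultimately show ?thesis unfolding set_mult_def by blast
  qed
  have cL: "g1 \<otimes> b \<otimes> inv g1 \<in> ?B" if g1: "g1 \<in> ?L" and b: "b \<in> ?B" for g1 b
  proof -
    obtain h n where a: "h \<in> H" "n \<in> ?L'" "b = h \<otimes> n" using b unfolding set_mult_def by blast
    have c: "g1 \<in> carrier G" "h \<in> carrier G" "n \<in> carrier G" using a g1 Hc Lc by auto
    let ?c = "g1 \<otimes> h \<otimes> inv g1 \<otimes> inv h"
    have cc: "?c \<in> ?L'" using comm_in_lower_central[OF g1 c(2)] .
    have d: "inv h \<otimes> ?c \<otimes> inv (inv h) \<in> ?L'" using normal_invE(2)[OF NL' inv_closed[OF c(2)] cc] .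
    have e: "g1 \<otimes> n \<otimes> inv g1 \<in> ?L'" using normal_invE(2)[OF NL' c(1) a(2)] .
    have "g1 \<otimes> b \<otimes> inv g1 = h \<otimes> ((inv h \<otimes> ?c \<otimes> inv (inv h)) \<otimes> (g1 \<otimes> n \<otimes> inv g1))"
      using a c by (simp add: m_assoc)
    moreover have "(inv h \<otimes> ?c \<otimes> inv (inv h)) \<otimes> (g1 \<otimes> n \<otimes> inv g1) \<in> ?L'"
      using d e subgroup.m_closed[OF normal_imp_subgroup[OF NL']] by blast
    ultimately show ?thesis using a(1) unfolding set_mult_def by blast
  qed
  show ?thesis
  proof (rule A.normal_invI[OF sBA])
    fix x b assume x: "x \<in> carrier (G\<lparr>carrier := ?A\<rparr>)" and b: "b \<in> ?B"
    obtain h1 g1 where a: "h1 \<in> H" "g1 \<in> ?L" "x = h1 \<otimes> g1" using x unfolding set_mult_def by auto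
    have c: "h1 \<in> carrier G" "g1 \<in> carrier G" using a Hc Lc by auto
    have bc: "b \<in> carrier G" using b sB subgroup.subset by blast
    have ix: "inv\<^bsub>G\<lparr>carrier := ?A\<rparr>\<^esub> x = inv x" using m_inv_consistent[OF sA] x by simp
    have "x \<otimes> b \<otimes> inv x = h1 \<otimes> (g1 \<otimes> b \<otimes> inv g1) \<otimes> inv h1"
      using a c bc by (simp add: inv_mult_group m_assoc)
    moreover have "h1 \<otimes> (g1 \<otimes> b \<otimes> inv g1) \<otimes> inv h1 \<in> ?B" using cH[OF a(1) cL[OF a(2) b]] .
    ultimately show "x \<otimes>\<^bsub>G\<lparr>carrier := ?A\<rparr>\<^esub> b \<otimes>\<^bsub>G\<lparr>carrier := ?A\<rparr>\<^esub> inv\<^bsub>G\<lparr>carrier := ?A\<rparr>\<^esub> x \<in> ?B"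
      using ix by simp
  qed
qed

lemma (in group) subnormal_from_lower_central:
  assumes H: "subgroup H G" and Ln: "lower_central G n \<subseteq> H"
  shows "subnormal G H"
proof -
  define hs where "hs = map (\<lambda>i. H <#> lower_central G (n - i)) [0..<Suc n]"
  have len: "length hs = Suc n" by (simp add: hs_def)
  have nth: "hs ! i = H <#> lower_central G (n - i)" if "i < Suc n" for i
    using that by (simp add: hs_def del: upt_Suc)
  have Hc: "H \<subseteq> carrier G" using H subgroup.subset by blast
  have "H <#> lower_central G n = H"
  proof
    show "H <#> lower_central G n \<subseteq> H"
      using Ln subgroup.m_closed[OF H] unfolding set_mult_def by blast
    show "H \<subseteq> H <#> lower_central G n"
    proof
      fix h assume h: "h \<in> H"
      then have "h = h \<otimes> \<one>" using Hc by auto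
      then show "h \<in> H <#> lower_central G n" using h one_lower_central unfolding set_mult_def by blast
    qed
  qed
  moreover have ne: "hs \<noteq> []" using len by auto
  ultimately have hd: "hd hs = H" using nth[of 0] hd_conv_nth[OF ne] by simp
  have "H <#> lower_central G 0 = carrier G"
  proof
    show "H <#> lower_central G 0 \<subseteq> carrier G" using setmult_subset_G[OF Hc] by simp
    show "carrier G \<subseteq> H <#> lower_central G 0"
    proof
      fix g assume g: "g \<in> carrier G"
      then have "g = \<one> \<otimes> g" by simp
      then show "g \<in> H <#> lower_central G 0" using g subgroup.one_closed[OF H] unfolding set_mult_def by force
    qed
  qed
  then have last: "last hs = carrier G" using nth[of n] len last_conv_nth[OF ne] by simp
  have step: "\<forall>i. Suc i < length hs \<longrightarrow> hs ! i \<lhd> G\<lparr>carrier := hs ! Suc i\<rparr>"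
  proof (intro allI impI)
    fix i assume i: "Suc i < length hs"
    then have e: "n - i = Suc (n - Suc i)" using len by simp
    show "hs ! i \<lhd> G\<lparr>carrier := hs ! Suc i\<rparr>"
      using chain_step[OF H, of "n - Suc i"] nth[of i] nth[of "Suc i"] i len e by simp
  qed
  show ?thesis unfolding subnormal_def using ne hd last step by blast
qed

lemma (in group) C_imp_D:
  assumes C: "\<forall>N. N \<lhd> G \<and> finite (carrier (G Mod N)) \<longrightarrow> nilpotent_group (G Mod N)"
    and fi: "finite_index G H"
  shows "subnormal G H"
proof -
  obtain K where K: "K \<lhd> G" "K \<subseteq> H" "finite (rcosets K)" using core_exists[OF fi] by blast
  interpret K: normal K G using K(1) .
  have "finite (carrier (G Mod K))" using K(3) by (simp add: FactGroup_def)
  then have "nilpotent_group (G Mod K)" using C K(1) by blast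
  then obtain n where n: "lower_central (G Mod K) n = {\<one>\<^bsub>G Mod K\<^esub>}" unfolding nilpotent_group_def by blast
  have "lower_central G n \<subseteq> K"
  proof
    fix x assume x: "x \<in> lower_central G n"
    then have "K #> x = K" using K.lower_central_Mod n by auto
    moreover have "x \<in> K #> x" using x lower_central_sub_carrier rcos_self[OF _ K.is_subgroup] by blast
    ultimately show "x \<in> K" by simp
  qed
  then show ?thesis using subnormal_from_lower_central fi K(2) unfolding finite_index_def by blast
qed



lemma (in group) rcosets_sub:
  "rcosets\<^bsub>G\<lparr>carrier := K\<rparr>\<^esub> H = (\<lambda>k. H #> k) ` K"
  by (auto simp: RCOSETS_def r_coset_def)

lemma (in group) index_mult:
  assumes H: "subgroup H G" and K: "subgroup K G" and HK: "H \<subseteq> K" and fH: "finite (rcosets H)"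
  shows "finite (rcosets K)" "finite (rcosets\<^bsub>G\<lparr>carrier := K\<rparr>\<^esub> H)"
    "card (rcosets H) = card (rcosets K) * card (rcosets\<^bsub>G\<lparr>carrier := K\<rparr>\<^esub> H)"
proof -
  have Hc: "H \<subseteq> carrier G" using H subgroup.subset by blast
  have Kc: "K \<subseteq> carrier G" using K subgroup.subset by blast
  have "\<forall>x\<in>carrier G. \<forall>y\<in>carrier G. H #> x = H #> y \<longrightarrow> K #> x = K #> y"
  proof (intro ballI impI)
    fix x y assume x: "x \<in> carrier G" and y: "y \<in> carrier G" and e: "H #> x = H #> y"
    have "x \<otimes> inv y \<in> H" using rcos_eq_iff[OF H x y] e by simp
    then have "x \<otimes> inv y \<in> K" using HK by blast
    then show "K #> x = K #> y" using rcos_eq_iff[OF K x y] by simp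
  qed
  moreover have "finite ((\<lambda>x. H #> x) ` carrier G)" using fH unfolding rcosets_eq_image .
  ultimately have "finite ((\<lambda>x. K #> x) ` carrier G)" by (rule finite_image_factor)
  then show fK: "finite (rcosets K)" unfolding rcosets_eq_image .
  let ?R = "(\<lambda>k. H #> k) ` K"
  define piece where "piece B = {A \<in> rcosets H. A \<subseteq> B}" for B
  have bij: "bij_betw (\<lambda>C. C #> x) ?R (piece (K #> x))" if x: "x \<in> carrier G" for x
  proof -
    have into: "C #> x \<in> piece (K #> x)" if C: "C \<in> ?R" for C
    proof -
      obtain k where k: "k \<in> K" "C = H #> k" using C by auto
      have kc: "k \<in> carrier G" using k Kc by auto
      have e: "C #> x = H #> (k \<otimes> x)" using k kc x Hc by (simp add: coset_mult_assoc)
      have "H #> (k \<otimes> x) \<in> rcosets H" using kc x by (simp add: rcosetsI[OF Hc])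
      moreover have "H #> (k \<otimes> x) \<subseteq> K #> x"
      proof
        fix z assume "z \<in> H #> (k \<otimes> x)"
        then obtain h where h: "h \<in> H" "z = h \<otimes> (k \<otimes> x)" by (auto simp: r_coset_def)
        have "z = (h \<otimes> k) \<otimes> x" using h kc x Hc by (simp add: m_assoc subset_iff)
        moreover have "h \<otimes> k \<in> K" using h k HK subgroup.m_closed[OF K] by blast
        ultimately show "z \<in> K #> x" by (auto simp: r_coset_def)
      qed
      ultimately show ?thesis using e by (simp add: piece_def)
    qed
    have inj: "inj_on (\<lambda>C. C #> x) ?R"
    proof (rule inj_onI)
      fix C D assume C: "C \<in> ?R" and D: "D \<in> ?R" and e: "C #> x = D #> x"
      have Cc: "C \<subseteq> carrier G" using C Hc Kc by (auto simp: r_coset_def)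
      have Dc: "D \<subseteq> carrier G" using D Hc Kc by (auto simp: r_coset_def)
      have "C #> x #> inv x = D #> x #> inv x" using e by simp
      then show "C = D" using Cc Dc x by (simp add: coset_mult_assoc)
    qed
    have surj: "piece (K #> x) \<subseteq> (\<lambda>C. C #> x) ` ?R"
    proof
      fix A assume A: "A \<in> piece (K #> x)"
      then have Ar: "A \<in> rcosets H" and AK: "A \<subseteq> K #> x" by (auto simp: piece_def)
      obtain y where y: "y \<in> carrier G" "A = H #> y" using Ar by (auto simp: RCOSETS_def)
      have "y \<in> A" using y rcos_self[OF y(1) H] by simp
      then have "y \<in> K #> x" using AK by auto
      then obtain k where k: "k \<in> K" "y = k \<otimes> x" by (auto simp: r_coset_def)
      have kc: "k \<in> carrier G" using k Kc by auto
      have "A = (H #> k) #> x" using y k kc x Hc by (simp add: coset_mult_assoc)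
      then show "A \<in> (\<lambda>C. C #> x) ` ?R" using k by auto
    qed
    show ?thesis unfolding bij_betw_def using inj into surj by blast
  qed
  have union: "rcosets H = \<Union>(piece ` (rcosets K))"
  proof
    show "rcosets H \<subseteq> \<Union>(piece ` (rcosets K))"
    proof
      fix A assume A: "A \<in> rcosets H"
      obtain y where y: "y \<in> carrier G" "A = H #> y" using A by (auto simp: RCOSETS_def)
      have "A \<subseteq> K #> y" using y HK by (auto simp: r_coset_def)
      moreover have "K #> y \<in> rcosets K" using y by (simp add: rcosetsI[OF Kc])
      ultimately show "A \<in> \<Union>(piece ` (rcosets K))" using A by (auto simp: piece_def)
    qed
    show "\<Union>(piece ` (rcosets K)) \<subseteq> rcosets H" by (auto simp: piece_def)
  qed
  have disj: "\<forall>B1\<in>rcosets K. \<forall>B2\<in>rcosets K. B1 \<noteq> B2 \<longrightarrow> piece B1 \<inter> piece B2 = {}"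
  proof (intro ballI impI)
    fix B1 B2 assume B1: "B1 \<in> rcosets K" and B2: "B2 \<in> rcosets K" and ne: "B1 \<noteq> B2"
    show "piece B1 \<inter> piece B2 = {}"
    proof (rule ccontr)
      assume "piece B1 \<inter> piece B2 \<noteq> {}"
      then obtain A where A: "A \<in> rcosets H" "A \<subseteq> B1" "A \<subseteq> B2" by (auto simp: piece_def)
      obtain y where y: "y \<in> carrier G" "A = H #> y" using A by (auto simp: RCOSETS_def)
      have "y \<in> A" using y rcos_self[OF y(1) H] by simp
      then have "y \<in> B1 \<inter> B2" using A by auto
      moreover have "B1 \<inter> B2 = {}" using rcos_disjoint[OF K] B1 B2 ne by (auto simp: pairwise_def disjnt_def)
      ultimately show False by simp
    qed
  qed
  have cardp: "card (piece B) = card ?R" if B: "B \<in> rcosets K" for B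
  proof -
    obtain x where x: "x \<in> carrier G" "B = K #> x" using B by (auto simp: RCOSETS_def)
    show ?thesis using bij_betw_same_card[OF bij[OF x(1)]] x by simp
  qed
  have finR: "finite ?R"
  proof -
    have "piece (K #> \<one>) \<subseteq> rcosets H" by (auto simp: piece_def)
    then have "finite (piece (K #> \<one>))" using fH finite_subset by blast
    then show ?thesis using bij_betw_finite[OF bij[OF one_closed]] by simp
  qed
  then show "finite (rcosets\<^bsub>G\<lparr>carrier := K\<rparr>\<^esub> H)" by (simp add: rcosets_sub)
  have finp: "\<forall>B\<in>rcosets K. finite (piece B)" using fH by (auto simp: piece_def)
  have "card (rcosets H) = (\<Sum>B\<in>rcosets K. card (piece B))"
    using card_UN_disjoint[OF fK finp disj] union by simp
  also have "\<dots> = (\<Sum>B\<in>rcosets K. card ?R)" using cardp by simp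
  also have "\<dots> = card (rcosets K) * card ?R" by simp
  finally show "card (rcosets H) = card (rcosets K) * card (rcosets\<^bsub>G\<lparr>carrier := K\<rparr>\<^esub> H)"
    by (simp add: rcosets_sub)
qed

lemma (in group) normal_sub_pow:
  assumes K: "subgroup K G" and N: "H \<lhd> G\<lparr>carrier := K\<rparr>"
    and fin: "finite (rcosets\<^bsub>G\<lparr>carrier := K\<rparr>\<^esub> H)" and y: "y \<in> K"
  shows "y [^] card (rcosets\<^bsub>G\<lparr>carrier := K\<rparr>\<^esub> H) \<in> H"
proof -
  interpret KN: normal H "G\<lparr>carrier := K\<rparr>" using N .
  interpret Q: group "G\<lparr>carrier := K\<rparr> Mod H" by (rule KN.factorgroup_is_group)
  let ?n = "card (rcosets\<^bsub>G\<lparr>carrier := K\<rparr>\<^esub> H)"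
  have yK: "y \<in> carrier (G\<lparr>carrier := K\<rparr>)" using y by simp
  have "order (G\<lparr>carrier := K\<rparr> Mod H) = ?n" by (simp add: order_def FactGroup_def)
  moreover have "H #>\<^bsub>G\<lparr>carrier := K\<rparr>\<^esub> y \<in> carrier (G\<lparr>carrier := K\<rparr> Mod H)"
    using yK carrier_FactGroup by blast
  ultimately have "(H #>\<^bsub>G\<lparr>carrier := K\<rparr>\<^esub> y) [^]\<^bsub>G\<lparr>carrier := K\<rparr> Mod H\<^esub> ?n = H"
    using Q.pow_order_eq_1 by simp
  then have e: "H #>\<^bsub>G\<lparr>carrier := K\<rparr>\<^esub> (y [^]\<^bsub>G\<lparr>carrier := K\<rparr>\<^esub> ?n) = H"
    using KN.FactGroup_pow[OF yK] by simp
  have yn: "y [^]\<^bsub>G\<lparr>carrier := K\<rparr>\<^esub> ?n \<in> carrier (G\<lparr>carrier := K\<rparr>)" using KN.nat_pow_closed[OF yK] .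
  have "y [^]\<^bsub>G\<lparr>carrier := K\<rparr>\<^esub> ?n \<in> H"
    using KN.rcos_self[OF yn KN.is_subgroup] e by simp
  then show ?thesis by (simp add: nat_pow_consistent[symmetric])
qed



lemma (in group) D_imp_B:
  assumes sn: "subnormal G H" and fi: "finite_index G H"
  shows "exponential G H"
proof -
  obtain hs where hs: "hs \<noteq> []" "hd hs = H" "last hs = carrier G"
    "\<forall>i. Suc i < length hs \<longrightarrow> hs ! i \<lhd> G\<lparr>carrier := hs ! Suc i\<rparr>"
    using sn unfolding subnormal_def by blast
  have sH: "subgroup H G" and fH: "finite (rcosets H)" using fi by (auto simp: finite_index_def)
  let ?l = "length hs"
  have l0: "?l > 0" using hs(1) by simp
  have h0: "hs ! 0 = H" using hs(1,2) by (simp add: hd_conv_nth)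
  have hl: "hs ! (?l - 1) = carrier G" using hs(1,3) by (simp add: last_conv_nth)
  have step_sub: "hs ! i \<subseteq> hs ! Suc i" if "Suc i < ?l" for i
  proof -
    have "subgroup (hs ! i) (G\<lparr>carrier := hs ! Suc i\<rparr>)" using hs(4) that normal_imp_subgroup by blast
    then show ?thesis using subgroup.subset by fastforce
  qed
  have Hsub: "H \<subseteq> hs ! i" if "i < ?l" for i
    using that
  proof (induction i)
    case 0 then show ?case using h0 by simp
  next
    case (Suc i) then show ?case using step_sub[of i] by auto
  qed
  have main: "subgroup (hs ! (?l - 1 - d)) G \<and>
      (\<forall>x\<in>carrier G. x [^] card (rcosets (hs ! (?l - 1 - d))) \<in> hs ! (?l - 1 - d))"
    if "d < ?l" for d
    using that
  proof (induction d)
    case 0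
    have "rcosets (carrier G) = {carrier G}"
    proof
      show "rcosets (carrier G) \<subseteq> {carrier G}"
        using subgroup.rcos_const[OF subgroup_self is_group] by (auto simp: RCOSETS_def)
      show "{carrier G} \<subseteq> rcosets (carrier G)"
        using subgroup.subgroup_in_rcosets[OF subgroup_self is_group] by simp
    qed
    then show ?case using hl subgroup_self by simp
  next
    case (Suc d)
    let ?i = "?l - 1 - Suc d"
    have ii: "Suc ?i = ?l - 1 - d" "Suc ?i < ?l" using Suc.prems by auto
    let ?K = "hs ! Suc ?i" and ?Hi = "hs ! ?i"
    have IH: "subgroup ?K G" "\<forall>x\<in>carrier G. x [^] card (rcosets ?K) \<in> ?K"
      using Suc.IH Suc.prems ii(1) by auto
    have N: "?Hi \<lhd> G\<lparr>carrier := ?K\<rparr>" using hs(4) ii(2) by blast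
    have sHi: "subgroup ?Hi G" using incl_subgroup[OF IH(1) normal_imp_subgroup[OF N]] .
    have HiK: "?Hi \<subseteq> ?K" using step_sub[OF ii(2)] .
    have HHi: "H \<subseteq> ?Hi" using Hsub ii(2) by simp
    have fHi: "finite (rcosets ?Hi)" using index_mult(1)[OF sH sHi HHi fH] .
    note im = index_mult[OF sHi IH(1) HiK fHi]
    have "\<forall>x\<in>carrier G. x [^] card (rcosets ?Hi) \<in> ?Hi"
    proof
      fix x assume x: "x \<in> carrier G"
      have "x [^] card (rcosets ?K) \<in> ?K" using IH(2) x by blast
      then have "(x [^] card (rcosets ?K)) [^] card (rcosets\<^bsub>G\<lparr>carrier := ?K\<rparr>\<^esub> ?Hi) \<in> ?Hi"
        using normal_sub_pow[OF IH(1) N im(2)] by blast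
      then show "x [^] card (rcosets ?Hi) \<in> ?Hi" using im(3) x by (simp add: nat_pow_pow)
    qed
    then show ?case using sHi by simp
  qed
  have "\<forall>x\<in>carrier G. x [^] card (rcosets H) \<in> H" using main[of "?l - 1"] l0 h0 by simp
  then show ?thesis using fi unfolding exponential_def group_index_def by blast
qed

theorem proposition5p6:
  fixes G :: "('a, 'b) monoid_scheme"
  assumes "group G"
  shows "(carrier G = S_set G \<longleftrightarrow> (\<forall>H. finite_index G H \<longrightarrow> exponential G H))
    \<and> ((\<forall>H. finite_index G H \<longrightarrow> exponential G H) \<longleftrightarrow>
         (\<forall>N. N \<lhd> G \<and> finite (carrier (G Mod N)) \<longrightarrow> nilpotent_group (G Mod N)))
    \<and> ((\<forall>N. N \<lhd> G \<and> finite (carrier (G Mod N)) \<longrightarrow> nilpotent_group (G Mod N)) \<longleftrightarrow>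
         (\<forall>H. finite_index G H \<longrightarrow> subnormal G H))"
proof -
  interpret group G by (rule assms)
  have BC: "(\<forall>H. finite_index G H \<longrightarrow> exponential G H) \<Longrightarrow>
       (\<forall>N. N \<lhd> G \<and> finite (carrier (G Mod N)) \<longrightarrow> nilpotent_group (G Mod N))"
    using B_imp_C by blast
  have CD: "(\<forall>N. N \<lhd> G \<and> finite (carrier (G Mod N)) \<longrightarrow> nilpotent_group (G Mod N)) \<Longrightarrow>
       (\<forall>H. finite_index G H \<longrightarrow> subnormal G H)"
    using C_imp_D by blast
  have DB: "(\<forall>H. finite_index G H \<longrightarrow> subnormal G H) \<Longrightarrow>
       (\<forall>H. finite_index G H \<longrightarrow> exponential G H)"
    using D_imp_B by blast
  show ?thesis using AB_equiv[of G] BC CD DB by blast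
qed

end
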